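(* Let $R$ be an integral domain and $M=\begin{pmatrix}a&b\\c&d\end{pmatrix}$ a $2\times2$ matrix over $R$. The map $S\colon R^2\to R^2$ given by left multiplication by $M$ on column vectors is a solution of the Yang--Baxter equation on $R$ if and only if $M$ has at least one of the following forms (for some $b,c\in R$): $$\begin{pmatrix}1-bc&b\\c&0\end{pmatrix},\quad \begin{pmatrix}0&b\\c&1-bc\end{pmatrix},\quad \begin{pmatrix}0&b\\c&0\end{pmatrix},\quad \begin{pmatrix}1&0\\0&1\end{pmatrix}.$$
   Context: For a nonempty set $X$, a map $S\colon X^2\to X^2$ is a solution of the Yang--Baxter equation on $X$ if $S_1S_2S_1=S_2S_1S_2$ as maps $X^3\to X^3$, where $S_1=S\times\mathrm{Id}$ and $S_2=\mathrm{Id}\times S$. *)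

theory Defs
  imports Main
begin

text \<open>Yang-Baxter equation on the set X = UNIV of a type: S1 S2 S1 = S2 S1 S2 on X^3,
  where S1 = S x Id and S2 = Id x S. Triples are represented as 'a \<times> 'a \<times> 'a.\<close>

definition S1 :: "('a \<times> 'a \<Rightarrow> 'a \<times> 'a) \<Rightarrow> 'a \<times> 'a \<times> 'a \<Rightarrow> 'a \<times> 'a \<times> 'a" where
  "S1 S = (\<lambda>(x, y, z). let (u, v) = S (x, y) in (u, v, z))"

definition S2 :: "('a \<times> 'a \<Rightarrow> 'a \<times> 'a) \<Rightarrow> 'a \<times> 'a \<times> 'a \<Rightarrow> 'a \<times> 'a \<times> 'a" where
  "S2 S = (\<lambda>(x, y, z). let (v, w) = S (y, z) in (x, v, w))"

definition is_YBE_solution :: "('a \<times> 'a \<Rightarrow> 'a \<times> 'a) \<Rightarrow> bool" where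
  "is_YBE_solution S \<longleftrightarrow> S1 S \<circ> S2 S \<circ> S1 S = S2 S \<circ> S1 S \<circ> S2 S"

definition mat2_map :: "'a::comm_ring_1 \<Rightarrow> 'a \<Rightarrow> 'a \<Rightarrow> 'a \<Rightarrow> 'a \<times> 'a \<Rightarrow> 'a \<times> 'a" where
  "mat2_map a b c d = (\<lambda>(x, y). (a * x + b * y, c * x + d * y))"

end

theory Submission
  imports Defs
begin

lemma ybe_iff:
  fixes a b c d :: "'a::idom"
  shows "is_YBE_solution (mat2_map a b c d) \<longleftrightarrow>
    a * (a + b * c - 1) = 0 \<and> a * b * d = 0 \<and> a * c * d = 0 \<and>
    a * d * (d - a) = 0 \<and> d * (d + b * c - 1) = 0"
proof -
  have "is_YBE_solution (mat2_map a b c d) \<longleftrightarrow>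
    (\<forall>x y z. (S1 (mat2_map a b c d) \<circ> S2 (mat2_map a b c d) \<circ> S1 (mat2_map a b c d)) (x,y,z)
      = (S2 (mat2_map a b c d) \<circ> S1 (mat2_map a b c d) \<circ> S2 (mat2_map a b c d)) (x,y,z))"
    unfolding is_YBE_solution_def fun_eq_iff by auto
  also have "\<dots> \<longleftrightarrow> (\<forall>x y z::'a.
      (a*a+a*b*c)*x + (a*b+a*b*d)*y + b*b*z = a*x + a*b*y + b*b*z \<and>
      (c*a+a*d*c)*x + (c*b+a*d*d)*y + b*d*z = a*c*x + (a*a*d+b*c)*y + (a*b*d+b*d)*z \<and>
      c*c*x + c*d*y + d*z = c*c*x + (a*c*d+c*d)*y + (b*c*d+d*d)*z)" (is "_ \<longleftrightarrow> ?P")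
    by (simp add: S1_def S2_def mat2_map_def Let_def algebra_simps)
  also have "?P \<longleftrightarrow> a * (a + b * c - 1) = 0 \<and> a * b * d = 0 \<and> a * c * d = 0 \<and>
    a * d * (d - a) = 0 \<and> d * (d + b * c - 1) = 0" (is "?lhs \<longleftrightarrow> ?rhs")
  proof
    assume H: ?lhs
    note h1 = H[THEN spec, THEN spec, THEN spec]
    from h1[of 1 0 0] h1[of 0 1 0] h1[of 0 0 1]
    show ?rhs by (simp add: algebra_simps)
  next
    assume R: ?rhs
    show ?lhs
    proof (intro allI)
      fix x y z :: 'a
      have q1: "((a*a+a*b*c)*x + (a*b+a*b*d)*y + b*b*z) - (a*x + a*b*y + b*b*z)
        = x * (a * (a + b * c - 1)) + y * (a * b * d)" by (simp add: algebra_simps)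
      have q2: "((c*a+a*d*c)*x + (c*b+a*d*d)*y + b*d*z) - (a*c*x + (a*a*d+b*c)*y + (a*b*d+b*d)*z)
        = x * (a * c * d) + y * (a * d * (d - a)) - z * (a * b * d)" by (simp add: algebra_simps)
      have q3: "(c*c*x + c*d*y + d*z) - (c*c*x + (a*c*d+c*d)*y + (b*c*d+d*d)*z)
        = - (y * (a * c * d)) - z * (d * (d + b * c - 1))" by (simp add: algebra_simps)
      have r: "a * (a + b * c - 1) = 0" "a * b * d = 0" "a * c * d = 0"
        "a * d * (d - a) = 0" "d * (d + b * c - 1) = 0" using R by blast+
      show "(a*a+a*b*c)*x + (a*b+a*b*d)*y + b*b*z = a*x + a*b*y + b*b*z \<and>
      (c*a+a*d*c)*x + (c*b+a*d*d)*y + b*d*z = a*c*x + (a*a*d+b*c)*y + (a*b*d+b*d)*z \<and>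
      c*c*x + c*d*y + d*z = c*c*x + (a*c*d+c*d)*y + (b*c*d+d*d)*z"
      proof (intro conjI)
        have "(a*a+a*b*c)*x + (a*b+a*b*d)*y + b*b*z - (a*x + a*b*y + b*b*z) = 0"
          unfolding q1 by (simp only: r mult_zero_right add_0_right diff_zero minus_zero)
        then show "(a*a+a*b*c)*x + (a*b+a*b*d)*y + b*b*z = a*x + a*b*y + b*b*z" by simp
        have "(c*a+a*d*c)*x + (c*b+a*d*d)*y + b*d*z - (a*c*x + (a*a*d+b*c)*y + (a*b*d+b*d)*z) = 0"
          unfolding q2 by (simp only: r mult_zero_right add_0_right diff_zero minus_zero)
        then show "(c*a+a*d*c)*x + (c*b+a*d*d)*y + b*d*z = a*c*x + (a*a*d+b*c)*y + (a*b*d+b*d)*z" by simp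
        have "c*c*x + c*d*y + d*z - (c*c*x + (a*c*d+c*d)*y + (b*c*d+d*d)*z) = 0"
          unfolding q3 by (simp only: r mult_zero_right add_0_right diff_zero minus_zero)
        then show "c*c*x + c*d*y + d*z = c*c*x + (a*c*d+c*d)*y + (b*c*d+d*d)*z" by (simp only: right_minus_eq)
      qed
    qed
  qed
  finally show ?thesis .
qed

theorem theorem5p10:
  fixes a b c d :: "'a::idom"
  shows "is_YBE_solution (mat2_map a b c d) \<longleftrightarrow>
     ((a = 1 - b * c \<and> d = 0) \<or>
      (a = 0 \<and> d = 1 - b * c) \<or>
      (a = 0 \<and> d = 0) \<or>
      (a = 1 \<and> b = 0 \<and> c = 0 \<and> d = 1))"
unfolding ybe_iff
proof
  assume H: "a * (a + b * c - 1) = 0 \<and> a * b * d = 0 \<and> a * c * d = 0 \<and>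
    a * d * (d - a) = 0 \<and> d * (d + b * c - 1) = 0"
  show "(a = 1 - b * c \<and> d = 0) \<or> (a = 0 \<and> d = 1 - b * c) \<or>
      (a = 0 \<and> d = 0) \<or> (a = 1 \<and> b = 0 \<and> c = 0 \<and> d = 1)"
  proof (cases "a = 0")
    case True
    have "d = 0 \<or> d + b * c - 1 = 0" using H by simp
    then show ?thesis using True by (auto simp: algebra_simps)
  next
    case False
    then have "a + b * c - 1 = 0" using H by simp
    then have a1: "a = 1 - b * c" by (simp add: algebra_simps)
    show ?thesis
    proof (cases "d = 0")
      case True then show ?thesis using a1 by simp
    next
      case d: False
      have "d = a" using H False d by simp
      moreover have "b = 0" "c = 0" using H False d by auto
      ultimately show ?thesis using a1 by simp
    qed
  qed
next
  assume "(a = 1 - b * c \<and> d = 0) \<or> (a = 0 \<and> d = 1 - b * c) \<or>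
      (a = 0 \<and> d = 0) \<or> (a = 1 \<and> b = 0 \<and> c = 0 \<and> d = 1)"
  then show "a * (a + b * c - 1) = 0 \<and> a * b * d = 0 \<and> a * c * d = 0 \<and>
    a * d * (d - a) = 0 \<and> d * (d + b * c - 1) = 0" by auto
qed

end
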